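(* Let $x \in (-1/\phi, 1/\phi)$, where $\phi = (1+\sqrt{5})/2$, and let $m \geq 1$ be an integer. Then \[ \sum_{r=1}^{\infty} r^m F_r x^r = \frac{1}{1 - x - x^2} \sum_{i=1}^m \binom{m}{i} (-1)^{i + 1} \sum_{r=1}^{\infty} r^{m - i} F_r x^r + \frac{x^2}{1 - x - x^2} \sum_{i=1}^m \binom{m}{i} \sum_{r=1}^{\infty} r^{m - i} F_r x^r . \]
   Context: $(F_r)_{r \geq 0}$ is the Fibonacci sequence: $F_0 = 0$, $F_1 = 1$, $F_r = F_{r-1} + F_{r-2}$ for $r \geq 2$. For every integer $j \ge 0$ and $x \in (-1/\phi,1/\phi)$ the series $\sum_{r\ge1} r^j F_r x^r$ converges. *)

theory Defs
  imports "HOL-Analysis.Analysis" "HOL-Number_Theory.Fib"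
begin

definition phi :: real where "phi = (1 + sqrt 5) / 2"

definition fibS :: "nat \<Rightarrow> real \<Rightarrow> real" where
  "fibS j x = (\<Sum>r. real (Suc r) ^ j * real (fib (Suc r)) * x ^ (Suc r))"

end

theory Submission
  imports Defs
begin

lemma phi_sq: "phi ^ 2 = phi + 1"
  unfolding phi_def by (simp add: power2_eq_square field_simps)

lemma phi_pos: "phi > 1"
proof -
  have "sqrt 5 > 1" by simp
  thus ?thesis unfolding phi_def by simp
qed

lemma fib_le_phi: "real (fib n) \<le> phi ^ n"
proof (induction n rule: fib.induct)
  case 1 then show ?case by simp
next
  case 2 then show ?case using phi_pos by simp
next
  case (3 n)
  have "real (fib (Suc (Suc n))) = real (fib (Suc n)) + real (fib n)" by simp
  also have "\<dots> \<le> phi ^ Suc n + phi ^ n" using 3 by simp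
  also have "\<dots> = phi ^ n * (phi + 1)" by (simp add: algebra_simps)
  also have "\<dots> = phi ^ Suc (Suc n)" using phi_sq by (simp add: power2_eq_square)
  finally show ?case .
qed

lemma summable_pow_geo:
  fixes q :: real
  assumes "0 \<le> q" "q < 1"
  shows "summable (\<lambda>n. real n ^ j * q ^ n)"
proof (cases "q = 0")
  case True
  have "summable (\<lambda>n. if n < 1 then real n ^ j * q ^ n else 0)"
    by (rule summable_finite[of "{..<1}"]) auto
  moreover have "(\<lambda>n. if n < 1 then real n ^ j * q ^ n else 0) = (\<lambda>n. real n ^ j * q ^ n)"
    using True by (auto simp: fun_eq_iff)
  ultimately show ?thesis by metis
next
  case False
  hence qp: "q > 0" using assms by simp
  define c where "c = (1 + q) / 2"
  have c1: "c < 1" using assms unfolding c_def by simp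
  have cq: "c / q > 1" using assms qp unfolding c_def by (simp add: field_simps)
  have "(\<lambda>n. (real (Suc n) / real n) ^ j) \<longlonglongrightarrow> 1 ^ j"
    by (intro tendsto_power LIMSEQ_Suc_n_over_n)
  hence "eventually (\<lambda>n. (real (Suc n) / real n) ^ j < c / q) sequentially"
    using cq by (intro order_tendstoD(2)) auto
  then obtain N where N: "\<And>n. n \<ge> N \<Longrightarrow> (real (Suc n) / real n) ^ j < c / q"
    by (auto simp: eventually_sequentially)
  show ?thesis
  proof (rule summable_ratio_test[OF c1, of "Suc N"])
    fix n assume n: "n \<ge> Suc N"
    hence npos: "real n > 0" by simp
    have h: "(real (Suc n) / real n) ^ j * q \<le> c"
      using N[of n] n qp by (simp add: field_simps)
    have "real (Suc n) ^ j * q ^ Suc n = ((real (Suc n) / real n) ^ j * q) * (real n ^ j * q ^ n)"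
      using npos by (simp add: power_divide field_simps)
    also have "\<dots> \<le> c * (real n ^ j * q ^ n)"
      by (rule mult_right_mono[OF h]) (use assms in auto)
    finally show "norm (real (Suc n) ^ j * q ^ Suc n) \<le> c * norm (real n ^ j * q ^ n)"
      using assms by simp
  qed
qed

lemma summable_fibT:
  assumes "\<bar>x\<bar> < 1 / phi"
  shows "summable (\<lambda>n. real n ^ j * real (fib n) * x ^ n)"
proof -
  define q where "q = phi * \<bar>x\<bar>"
  have q0: "0 \<le> q" using phi_pos unfolding q_def by simp
  have q1: "q < 1" using assms phi_pos unfolding q_def by (simp add: field_simps)
  show ?thesis
  proof (rule summable_comparison_test[OF _ summable_pow_geo[OF q0 q1, of j]])
    show "\<exists>N. \<forall>n\<ge>N. norm (real n ^ j * real (fib n) * x ^ n) \<le> real n ^ j * q ^ n"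
    proof (intro exI allI impI)
      fix n :: nat
      have "norm (real n ^ j * real (fib n) * x ^ n) = real n ^ j * (real (fib n) * \<bar>x\<bar> ^ n)"
        by (simp add: abs_mult power_abs)
      also have "\<dots> \<le> real n ^ j * (phi ^ n * \<bar>x\<bar> ^ n)"
        by (intro mult_left_mono mult_right_mono fib_le_phi) auto
      also have "\<dots> = real n ^ j * q ^ n" unfolding q_def by (simp add: power_mult_distrib)
      finally show "norm (real n ^ j * real (fib n) * x ^ n) \<le> real n ^ j * q ^ n" .
    qed
  qed
qed

lemma fibS_eq:
  assumes "\<bar>x\<bar> < 1 / phi"
  shows "fibS j x = (\<Sum>n. real n ^ j * real (fib n) * x ^ n)"
  unfolding fibS_def using suminf_split_head[OF summable_fibT[OF assms, of j]] by simp

lemma binom_minus: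
  "real n ^ m - (real n - 1) ^ m = (\<Sum>i=1..m. real (m choose i) * (-1) ^ (i + 1) * real n ^ (m - i))"
proof -
  have "(real n - 1) ^ m = (-1 + real n) ^ m" by simp
  also have "\<dots> = (\<Sum>k\<le>m. real (m choose k) * (-1) ^ k * real n ^ (m - k))"
    by (rule binomial_ring)
  also have "{..m} = insert 0 {1..m}" by auto
  finally have "(real n - 1) ^ m = real n ^ m + (\<Sum>k=1..m. real (m choose k) * (-1) ^ k * real n ^ (m - k))"
    by simp
  moreover have "(\<Sum>k=1..m. real (m choose k) * (-1) ^ k * real n ^ (m - k))
      = - (\<Sum>i=1..m. real (m choose i) * (-1) ^ (i + 1) * real n ^ (m - i))"
    by (simp add: sum_negf[symmetric])
  ultimately show ?thesis by simp
qed

lemma binom_plus: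
  "(real n + 1) ^ m - real n ^ m = (\<Sum>i=1..m. real (m choose i) * real n ^ (m - i))"
proof -
  have "(real n + 1) ^ m = (1 + real n) ^ m" by (simp add: add.commute)
  also have "\<dots> = (\<Sum>k\<le>m. real (m choose k) * 1 ^ k * real n ^ (m - k))"
    by (rule binomial_ring)
  also have "{..m} = insert 0 {1..m}" by auto
  finally show ?thesis by simp
qed

theorem theorem4p1:
  fixes x :: real and m :: nat
  assumes "- 1 / phi < x" and "x < 1 / phi" and "m \<ge> 1"
  shows "fibS m x =
    1 / (1 - x - x^2) * (\<Sum>i=1..m. real (m choose i) * (-1) ^ (i + 1) * fibS (m - i) x)
    + x^2 / (1 - x - x^2) * (\<Sum>i=1..m. real (m choose i) * fibS (m - i) x)"
proof -
  have ax: "\<bar>x\<bar> < 1 / phi" using assms by auto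
  define T where "T j = (\<Sum>n. real n ^ j * real (fib n) * x ^ n)" for j
  have ST: "\<And>j. summable (\<lambda>n. real n ^ j * real (fib n) * x ^ n)" by (rule summable_fibT[OF ax])
  have FT: "\<And>j. fibS j x = T j" unfolding T_def by (rule fibS_eq[OF ax])
  define a where "a n = real n ^ m * real (fib n) * x ^ n" for n
  define u where "u n = (real n - 1) ^ m * real (fib n) * x ^ n" for n
  define v where "v n = a n * x" for n
  define w where "w n = (real n + 1) ^ m * real (fib n) * x ^ (n + 2)" for n
  have sa: "summable a" unfolding a_def by (rule ST)
  define A where "A = (\<Sum>i=1..m. real (m choose i) * (-1) ^ (i + 1) * T (m - i))"
  define B where "B = (\<Sum>i=1..m. real (m choose i) * T (m - i))"
  have eA: "(\<lambda>n. \<Sum>i=1..m. real (m choose i) * (-1) ^ (i + 1) * (real n ^ (m - i) * real (fib n) * x ^ n)) sums A"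
    unfolding A_def T_def
    by (intro sums_sum sums_mult summable_sums ST)
  have eA': "(\<lambda>n. \<Sum>i=1..m. real (m choose i) * (-1) ^ (i + 1) * (real n ^ (m - i) * real (fib n) * x ^ n)) = (\<lambda>n. a n - u n)"
  proof
    fix n
    have "a n - u n = (real n ^ m - (real n - 1) ^ m) * real (fib n) * x ^ n"
      unfolding a_def u_def by (simp add: algebra_simps)
    also have "\<dots> = (\<Sum>i=1..m. real (m choose i) * (-1) ^ (i + 1) * (real n ^ (m - i) * real (fib n) * x ^ n))"
      unfolding binom_minus sum_distrib_right by (simp add: algebra_simps)
    finally show "(\<Sum>i=1..m. real (m choose i) * (-1) ^ (i + 1) * (real n ^ (m - i) * real (fib n) * x ^ n)) = a n - u n" by simp
  qed
  have amu: "(\<lambda>n. a n - u n) sums A" using eA eA' by simp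
  have su: "summable u"
  proof -
    have "(\<lambda>n. a n - (a n - u n)) sums (suminf a - A)"
      by (intro sums_diff summable_sums sa amu)
    thus ?thesis by (simp add: sums_iff)
  qed
  have hA: "A = suminf a - suminf u"
    using amu sums_diff[OF summable_sums[OF sa] summable_sums[OF su]] sums_unique2 by blast
  have eB: "(\<lambda>n. x^2 * (\<Sum>i=1..m. real (m choose i) * (real n ^ (m - i) * real (fib n) * x ^ n))) sums (x^2 * B)"
    unfolding B_def T_def
    by (intro sums_mult sums_sum summable_sums ST)
  have eB': "(\<lambda>n. x^2 * (\<Sum>i=1..m. real (m choose i) * (real n ^ (m - i) * real (fib n) * x ^ n))) = (\<lambda>n. w n - x^2 * a n)"
  proof
    fix n
    have "w n - x^2 * a n = x^2 * (((real n + 1) ^ m - real n ^ m) * real (fib n) * x ^ n)"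
      unfolding a_def w_def by (simp add: algebra_simps power_add power2_eq_square)
    also have "\<dots> = x^2 * (\<Sum>i=1..m. real (m choose i) * (real n ^ (m - i) * real (fib n) * x ^ n))"
      unfolding binom_plus sum_distrib_right sum_distrib_left by (simp add: algebra_simps power2_eq_square)
    finally show "x^2 * (\<Sum>i=1..m. real (m choose i) * (real n ^ (m - i) * real (fib n) * x ^ n)) = w n - x^2 * a n" by simp
  qed
  have wma: "(\<lambda>n. w n - x^2 * a n) sums (x^2 * B)" using eB eB' by simp
  have sw: "summable w"
  proof -
    have "(\<lambda>n. (w n - x^2 * a n) + x^2 * a n) sums (x^2 * B + x^2 * suminf a)"
      by (intro sums_add sums_mult summable_sums sa wma)
    thus ?thesis by (simp add: sums_iff)
  qed
  have hB: "x^2 * B = suminf w - x^2 * suminf a"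
    using wma sums_diff[OF summable_sums[OF sw] sums_mult[OF summable_sums[OF sa], of "x^2"]] sums_unique2 by blast
  have sv: "summable v" unfolding v_def by (intro summable_mult2 sa)
  have hv: "suminf v = x * suminf a" unfolding v_def using suminf_mult2[OF sa] by (simp add: mult.commute)
  have u01: "u 0 = 0" "u 1 = 0" unfolding u_def using assms(3) by auto
  have "(\<Sum>n. u (n + 2)) = suminf u - (\<Sum>i<2. u i)" by (rule suminf_minus_initial_segment[OF su])
  hence hu: "suminf u = (\<Sum>n. u (n + 2))" using u01 by (simp add: numeral_2_eq_2)
  have "(\<Sum>n. v (Suc n)) = suminf v - v 0" by (rule suminf_split_head[OF sv])
  hence hv0: "suminf v = (\<Sum>n. v (Suc n))" by (simp add: v_def a_def)
  have svs: "summable (\<lambda>n. v (Suc n))" using sv by (simp add: summable_Suc_iff)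
  have ueq: "\<And>n. u (n + 2) = v (Suc n) + w n"
  proof -
    fix n
    have "u (n + 2) = (real n + 1) ^ m * (real (fib (Suc n)) + real (fib n)) * x ^ (n + 2)"
      unfolding u_def by (simp add: numeral_2_eq_2 algebra_simps)
    also have "\<dots> = v (Suc n) + w n" unfolding v_def a_def w_def
      by (simp add: numeral_2_eq_2 algebra_simps)
    finally show "u (n + 2) = v (Suc n) + w n" .
  qed
  have huvw: "suminf u = suminf v + suminf w"
    unfolding hu hv0 ueq by (rule suminf_add[OF svs sw, symmetric])
  have D: "1 - x - x^2 > 0"
  proof -
    have p: "phi > 1" by (rule phi_pos)
    have ip: "1 / phi = phi - 1"
      using phi_sq p by (simp add: field_simps power2_eq_square)
    have "1 / phi < 1" using p by simp
    hence "x + phi > 0" using ax p by linarith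
    hence "(1 / phi - x) * (x + phi) > 0"
      using assms p by (intro mult_pos_pos) auto
    moreover have "(1 / phi - x) * (x + phi) = 1 - x - x^2"
      unfolding ip using phi_sq by (simp add: algebra_simps power2_eq_square)
    ultimately show ?thesis by simp
  qed
  have key: "(1 - x - x^2) * T m = A + x^2 * B"
    unfolding hA hB huvw hv T_def a_def[symmetric] by (simp add: algebra_simps power2_eq_square)
  have "fibS m x = T m" by (rule FT)
  also have "\<dots> = 1 / (1 - x - x^2) * A + x^2 / (1 - x - x^2) * B"
  proof -
    have "T m = (A + x^2 * B) / (1 - x - x^2)"
      using key D by (simp add: eq_divide_eq mult.commute)
    thus ?thesis by (simp add: add_divide_distrib)
  qed
  finally show ?thesis unfolding A_def B_def FT .
qed

end
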